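(* Let $G$ be a finite abelian group, $k\ge1$, $\Gamma=G\wr\mathbb{Z}^k=\Sigma\rtimes_\alpha\mathbb{Z}^k$, and $\varphi$ an automorphism of $\Gamma$ with restriction $\varphi'=\varphi|_\Sigma$ and induced automorphism $\overline{\varphi}$ of $\Gamma/\Sigma\cong\mathbb{Z}^k$. Let $\varphi_1:\Gamma\to\Gamma$ be defined by $\varphi_1(hm)=\varphi'(h)\overline{\varphi}(m)$ for $h\in\Sigma$, $m\in\mathbb{Z}^k$. Then $\varphi_1$ is an automorphism of $\Gamma$ and $R(\varphi)=R(\varphi_1)$.
   Context: Reidemeister number $R(\psi)$: number of classes of the relation $x\sim gx\psi(g^{-1})$, $g\in\Gamma$ (possibly $\infty$). $\Sigma=\bigoplus_{x\in\mathbb{Z}^k}G_x$, $G_x\cong G$, $\alpha(x)(g_y)=g_{x+y}$; $\Sigma$ is the torsion subset of $\Gamma$ and hence $\varphi$-invariant. *)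

theory Defs
  imports "HOL-Algebra.Algebra" "HOL-Library.Extended_Nat"
begin

text \<open>Z^k is represented as 'n => int with 'n a finite type, k = CARD('n) >= 1.
  The wreath product G wr Z^k = Sigma x|_alpha Z^k: elements are pairs (h, m) where
  h : Z^k -> carrier G is finitely supported (an element of the direct sum Sigma)
  and m in Z^k. The action alpha(x)(g_y) = g_(x+y) is the shift
  (alpha(m) h)(z) = h(z - m), so (h1,m1)(h2,m2) = (h1 * alpha(m1) h2, m1 + m2).\<close>

definition wreath_Zk :: "('g, 'b) monoid_scheme \<Rightarrow>
    (((('n::finite) \<Rightarrow> int) \<Rightarrow> 'g) \<times> ('n \<Rightarrow> int)) monoid" where
  "wreath_Zk G = \<lparr> carrier = {(h, m). (\<forall>z. h z \<in> carrier G) \<and> finite {z. h z \<noteq> \<one>\<^bsub>G\<^esub>}},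
     monoid.mult = (\<lambda>x y. (\<lambda>z. fst x z \<otimes>\<^bsub>G\<^esub> fst y (\<lambda>i. z i - snd x i), \<lambda>i. snd x i + snd y i)),
     one = (\<lambda>_. \<one>\<^bsub>G\<^esub>, \<lambda>_. 0) \<rparr>"

text \<open>The element h m of Gamma with h in Sigma, m in Z^k: h is (h, 0), m is (1, m).\<close>

definition sigma_elt :: "('g, 'b) monoid_scheme \<Rightarrow> ((('n::finite) \<Rightarrow> int) \<Rightarrow> 'g)
    \<Rightarrow> ((('n \<Rightarrow> int) \<Rightarrow> 'g) \<times> ('n \<Rightarrow> int))" where
  "sigma_elt G h = (h, \<lambda>_. 0)"

definition zk_elt :: "('g, 'b) monoid_scheme \<Rightarrow> (('n::finite) \<Rightarrow> int)
    \<Rightarrow> ((('n \<Rightarrow> int) \<Rightarrow> 'g) \<times> ('n \<Rightarrow> int))" where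
  "zk_elt G m = (\<lambda>_. \<one>\<^bsub>G\<^esub>, m)"

text \<open>phi' = restriction of phi to Sigma (as a map Sigma -> Gamma; Sigma is phi-invariant).
  phibar = induced automorphism of Gamma/Sigma, identified with Z^k via (h,m)Sigma |-> m,
  i.e. phibar(m) = Z^k-component of phi(m).
  phi1(h m) = phi'(h) phibar(m).\<close>

definition phi_bar :: "('g, 'b) monoid_scheme \<Rightarrow>
    (((('n::finite) \<Rightarrow> int) \<Rightarrow> 'g) \<times> ('n \<Rightarrow> int) \<Rightarrow> (('n \<Rightarrow> int) \<Rightarrow> 'g) \<times> ('n \<Rightarrow> int))
    \<Rightarrow> ('n \<Rightarrow> int) \<Rightarrow> ('n \<Rightarrow> int)" where
  "phi_bar G \<phi> m = snd (\<phi> (zk_elt G m))"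

definition phi_one :: "('g, 'b) monoid_scheme \<Rightarrow>
    (((('n::finite) \<Rightarrow> int) \<Rightarrow> 'g) \<times> ('n \<Rightarrow> int) \<Rightarrow> (('n \<Rightarrow> int) \<Rightarrow> 'g) \<times> ('n \<Rightarrow> int))
    \<Rightarrow> (('n \<Rightarrow> int) \<Rightarrow> 'g) \<times> ('n \<Rightarrow> int) \<Rightarrow> (('n \<Rightarrow> int) \<Rightarrow> 'g) \<times> ('n \<Rightarrow> int)" where
  "phi_one G \<phi> = (\<lambda>(h, m). \<phi> (sigma_elt G h) \<otimes>\<^bsub>wreath_Zk G\<^esub> zk_elt G (phi_bar G \<phi> m))"

text \<open>Twisted conjugacy (Reidemeister) relation x ~ g x psi(g^-1), and the Reidemeister number.\<close>

definition twisted_conj :: "('a, 'c) monoid_scheme \<Rightarrow> ('a \<Rightarrow> 'a) \<Rightarrow> ('a \<times> 'a) set" where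
  "twisted_conj \<Gamma> \<psi> = {(x, y). x \<in> carrier \<Gamma> \<and> y \<in> carrier \<Gamma> \<and>
     (\<exists>g \<in> carrier \<Gamma>. y = g \<otimes>\<^bsub>\<Gamma>\<^esub> x \<otimes>\<^bsub>\<Gamma>\<^esub> \<psi> (inv\<^bsub>\<Gamma>\<^esub> g))}"

definition reidemeister :: "('a, 'c) monoid_scheme \<Rightarrow> ('a \<Rightarrow> 'a) \<Rightarrow> enat" where
  "reidemeister \<Gamma> \<psi> = (if finite (carrier \<Gamma> // twisted_conj \<Gamma> \<psi>)
     then enat (card (carrier \<Gamma> // twisted_conj \<Gamma> \<psi>)) else \<infinity>)"

end

theory Submission
  imports Defs "HOL-Analysis.Analysis"
begin


definition additive_Z :: "(('n::finite \<Rightarrow> int) \<Rightarrow> ('n \<Rightarrow> int)) \<Rightarrow> bool" where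
  "additive_Z f \<longleftrightarrow> (\<forall>x y. f (\<lambda>i. x i + y i) = (\<lambda>i. f x i + f y i))"

lemma additive_ZD: "additive_Z f \<Longrightarrow> f (\<lambda>i. x i + y i) = (\<lambda>i. f x i + f y i)"
  by (simp add: additive_Z_def)

lemma additive_zero:
  fixes f :: "('n::finite \<Rightarrow> int) \<Rightarrow> ('n \<Rightarrow> int)"
  assumes add: "additive_Z f"
  shows "f (\<lambda>_. 0) = (\<lambda>_. 0)"
proof -
  have "f (\<lambda>i. 0 + 0) = (\<lambda>i. f (\<lambda>_. 0) i + f (\<lambda>_. 0) i)" by (rule additive_ZD[OF add])
  then have "\<And>i. f (\<lambda>_. 0) i = f (\<lambda>_. 0) i + f (\<lambda>_. 0) i" by (metis add_0)
  then show ?thesis by auto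
qed

lemma additive_neg:
  fixes f :: "('n::finite \<Rightarrow> int) \<Rightarrow> ('n \<Rightarrow> int)"
  assumes add: "additive_Z f"
  shows "f (\<lambda>i. - x i) = (\<lambda>i. - f x i)"
proof -
  have "f (\<lambda>i. x i + - x i) = (\<lambda>i. f x i + f (\<lambda>i. - x i) i)" by (rule additive_ZD[OF add])
  then have "(\<lambda>_. 0) = (\<lambda>i. f x i + f (\<lambda>i. - x i) i)" using additive_zero[OF add] by simp
  then show ?thesis by (auto simp: fun_eq_iff) (metis add.commute add_eq_0_iff)
qed

lemma additive_smult:
  fixes f :: "('n::finite \<Rightarrow> int) \<Rightarrow> ('n \<Rightarrow> int)"
  assumes add: "additive_Z f"
  shows "f (\<lambda>i. c * x i) = (\<lambda>i. c * f x i)"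
proof -
  have nat: "f (\<lambda>i. int n * x i) = (\<lambda>i. int n * f x i)" for n :: nat
  proof (induction n)
    case 0 then show ?case using additive_zero[OF add] by simp
  next
    case (Suc n)
    have "f (\<lambda>i. int (Suc n) * x i) = f (\<lambda>i. int n * x i + x i)" by (simp add: algebra_simps)
    also have "\<dots> = (\<lambda>i. int n * f x i + f x i)" using additive_ZD[OF add, of "\<lambda>i. int n * x i" x] Suc by simp
    finally show ?case by (simp add: algebra_simps)
  qed
  show ?thesis
  proof (cases "c \<ge> 0")
    case True then show ?thesis using nat[of "nat c"] by simp
  next
    case False
    have "(\<lambda>i. c * x i) = (\<lambda>i. - (\<lambda>i. int (nat (-c)) * x i) i)" using False by simp
    then have "f (\<lambda>i. c * x i) = f (\<lambda>i. - (\<lambda>i. int (nat (-c)) * x i) i)" by simp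
    also have "\<dots> = (\<lambda>i. - f (\<lambda>i. int (nat (-c)) * x i) i)" by (rule additive_neg[OF add])
    also have "\<dots> = (\<lambda>i. - (int (nat (-c)) * f x i))" by (simp only: nat)
    finally show ?thesis using False by simp
  qed
qed

lemma additive_sum:
  fixes f :: "('n::finite \<Rightarrow> int) \<Rightarrow> ('n \<Rightarrow> int)"
  assumes add: "additive_Z f"
  shows "finite S \<Longrightarrow> f (\<lambda>k. \<Sum>i\<in>S. g i k) = (\<lambda>k. \<Sum>i\<in>S. f (g i) k)"
proof (induction S rule: finite_induct)
  case empty then show ?case using additive_zero[OF add] by simp
next
  case (insert a S)
  have "f (\<lambda>k. \<Sum>i\<in>insert a S. g i k) = f (\<lambda>k. g a k + (\<Sum>i\<in>S. g i k))"
    using insert by simp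
  also have "\<dots> = (\<lambda>k. f (g a) k + f (\<lambda>k. \<Sum>i\<in>S. g i k) k)"
    by (rule additive_ZD[OF add])
  finally show ?case using insert by simp
qed

lemma additive_expand:
  fixes f :: "('n::finite \<Rightarrow> int) \<Rightarrow> ('n \<Rightarrow> int)"
  assumes add: "additive_Z f"
  shows "f x k = (\<Sum>i\<in>UNIV. x i * f (\<lambda>j. if j = i then 1 else 0) k)"
proof -
  have "x = (\<lambda>k. \<Sum>i\<in>UNIV. x i * (if k = i then 1 else 0))"
    by (simp add: fun_eq_iff if_distrib cong: if_cong)
  then have "f x = f (\<lambda>k. \<Sum>i\<in>UNIV. (\<lambda>k. x i * (if k = i then 1 else 0)) k)" by simp
  also have "\<dots> = (\<lambda>k. \<Sum>i\<in>UNIV. f (\<lambda>k. x i * (if k = i then 1 else 0)) k)"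
    by (rule additive_sum[OF add]) simp
  also have "\<dots> = (\<lambda>k. \<Sum>i\<in>UNIV. x i * f (\<lambda>j. if j = i then 1 else 0) k)"
    using additive_smult[OF add] by simp
  finally show ?thesis by simp
qed

lemma additive_inj:
  fixes f :: "('n::finite \<Rightarrow> int) \<Rightarrow> ('n \<Rightarrow> int)"
  assumes add: "additive_Z f"
    and cov: "\<And>v. \<exists>j::int. j > 0 \<and> (\<exists>w. f w = (\<lambda>i. j * v i))"
    and fx: "f x = (\<lambda>_. 0)"
  shows "x = (\<lambda>_. 0)"
proof -
  define e where "e i = (\<lambda>j::'n. if j = i then 1 else (0::int))" for i
  define F :: "real^'n \<Rightarrow> real^'n" where
    "F y = (\<chi> k. \<Sum>i\<in>UNIV. y$i * real_of_int (f (e i) k))" for y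
  have lin: "linear F"
    by (rule linearI) (simp_all add: F_def vec_eq_iff algebra_simps sum.distrib sum_distrib_left)
  have Fw: "F (\<chi> i. real_of_int (w i)) = (\<chi> k. real_of_int (f w k))" for w
    using additive_expand[OF add, of w] by (simp add: F_def e_def vec_eq_iff)
  have "Basis \<subseteq> range F"
  proof
    fix b :: "real^'n" assume "b \<in> Basis"
    then obtain i where b: "b = axis i 1" by (auto simp: Basis_vec_def)
    obtain j w where j: "j > 0" and w: "f w = (\<lambda>k. j * e i k)" using cov[of "e i"] by blast
    have "F ((1 / real_of_int j) *\<^sub>R (\<chi> i. real_of_int (w i))) = (1 / real_of_int j) *\<^sub>R (\<chi> k. real_of_int (f w k))"
      using Fw linear_scale[OF lin] by simp
    also have "\<dots> = b" using j by (simp add: w b e_def vec_eq_iff axis_def)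
    finally show "b \<in> range F" by (metis rangeI)
  qed
  then have "span Basis \<subseteq> range F"
    using span_mono[of Basis "range F"] span_linear_image[OF lin, of UNIV] by (simp add: span_UNIV)
  then have "surj F" by (auto simp: span_Basis)
  then have "inj F" using lin eucl.linear_surj_imp_inj by blast
  moreover have "F (\<chi> i. real_of_int (x i)) = F 0" using Fw fx linear_0[OF lin] by (simp add: vec_eq_iff)
  ultimately have "(\<chi> i. real_of_int (x i)) = 0" by (meson injD)
  then show ?thesis by (auto simp: vec_eq_iff fun_eq_iff)
qed



lemma carrier_wr: "x \<in> carrier (wreath_Zk G) \<longleftrightarrow> (\<forall>z. fst x z \<in> carrier G) \<and> finite {z. fst x z \<noteq> \<one>\<^bsub>G\<^esub>}"
  by (cases x) (simp add: wreath_Zk_def)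

lemma mult_wr: "x \<otimes>\<^bsub>wreath_Zk G\<^esub> y = (\<lambda>z. fst x z \<otimes>\<^bsub>G\<^esub> fst y (\<lambda>i. z i - snd x i), \<lambda>i. snd x i + snd y i)"
  by (simp add: wreath_Zk_def)

lemma one_wr: "\<one>\<^bsub>wreath_Zk G\<^esub> = (\<lambda>_. \<one>\<^bsub>G\<^esub>, \<lambda>_. 0)"
  by (simp add: wreath_Zk_def)

lemma group_wr:
  assumes "group G"
  shows "group (wreath_Zk G :: (((('n::finite) \<Rightarrow> int) \<Rightarrow> 'g) \<times> ('n \<Rightarrow> int)) monoid)"
proof -
  interpret G: group G by fact
  show ?thesis
  proof (rule groupI)
    fix x y :: "(('n \<Rightarrow> int) \<Rightarrow> 'g) \<times> ('n \<Rightarrow> int)"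
    assume x: "x \<in> carrier (wreath_Zk G)" and y: "y \<in> carrier (wreath_Zk G)"
    have "{z. fst x z \<otimes>\<^bsub>G\<^esub> fst y (\<lambda>i. z i - snd x i) \<noteq> \<one>\<^bsub>G\<^esub>} \<subseteq>
        {z. fst x z \<noteq> \<one>\<^bsub>G\<^esub>} \<union> (\<lambda>z i. z i + snd x i) ` {z. fst y z \<noteq> \<one>\<^bsub>G\<^esub>}"
    proof
      fix z assume z: "z \<in> {z. fst x z \<otimes>\<^bsub>G\<^esub> fst y (\<lambda>i. z i - snd x i) \<noteq> \<one>\<^bsub>G\<^esub>}"
      show "z \<in> {z. fst x z \<noteq> \<one>\<^bsub>G\<^esub>} \<union> (\<lambda>z i. z i + snd x i) ` {z. fst y z \<noteq> \<one>\<^bsub>G\<^esub>}"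
      proof (cases "fst x z = \<one>\<^bsub>G\<^esub>")
        case True
        then have "fst y (\<lambda>i. z i - snd x i) \<noteq> \<one>\<^bsub>G\<^esub>" using z x by (auto simp: carrier_wr)
        then show ?thesis
          by (intro UnI2 image_eqI[of z _ "\<lambda>i. z i - snd x i"]) auto
      qed simp
    qed
    moreover have "finite ({z. fst x z \<noteq> \<one>\<^bsub>G\<^esub>} \<union> (\<lambda>z i. z i + snd x i) ` {z. fst y z \<noteq> \<one>\<^bsub>G\<^esub>})"
      using x y by (simp add: carrier_wr)
    ultimately show "x \<otimes>\<^bsub>wreath_Zk G\<^esub> y \<in> carrier (wreath_Zk G)"
      using x y by (simp add: carrier_wr mult_wr finite_subset)
  next
    show "\<one>\<^bsub>wreath_Zk G\<^esub> \<in> carrier (wreath_Zk G)" by (simp add: carrier_wr one_wr)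
  next
    fix x y z :: "(('n \<Rightarrow> int) \<Rightarrow> 'g) \<times> ('n \<Rightarrow> int)"
    assume x: "x \<in> carrier (wreath_Zk G)" and y: "y \<in> carrier (wreath_Zk G)" and z: "z \<in> carrier (wreath_Zk G)"
    then show "x \<otimes>\<^bsub>wreath_Zk G\<^esub> y \<otimes>\<^bsub>wreath_Zk G\<^esub> z = x \<otimes>\<^bsub>wreath_Zk G\<^esub> (y \<otimes>\<^bsub>wreath_Zk G\<^esub> z)"
      by (simp add: mult_wr carrier_wr G.m_assoc diff_diff_eq add.assoc)
  next
    fix x :: "(('n \<Rightarrow> int) \<Rightarrow> 'g) \<times> ('n \<Rightarrow> int)"
    assume x: "x \<in> carrier (wreath_Zk G)"
    then show "\<one>\<^bsub>wreath_Zk G\<^esub> \<otimes>\<^bsub>wreath_Zk G\<^esub> x = x"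
      by (simp add: mult_wr carrier_wr one_wr)
  next
    fix x :: "(('n \<Rightarrow> int) \<Rightarrow> 'g) \<times> ('n \<Rightarrow> int)"
    assume x: "x \<in> carrier (wreath_Zk G)"
    define y where "y = ((\<lambda>z. inv\<^bsub>G\<^esub> fst x (\<lambda>i. z i + snd x i)), (\<lambda>i. - snd x i))"
    have "{z. fst y z \<noteq> \<one>\<^bsub>G\<^esub>} \<subseteq> (\<lambda>z i. z i - snd x i) ` {z. fst x z \<noteq> \<one>\<^bsub>G\<^esub>}"
    proof
      fix z assume "z \<in> {z. fst y z \<noteq> \<one>\<^bsub>G\<^esub>}"
      then have "fst x (\<lambda>i. z i + snd x i) \<noteq> \<one>\<^bsub>G\<^esub>" using x by (auto simp: y_def carrier_wr)
      then show "z \<in> (\<lambda>z i. z i - snd x i) ` {z. fst x z \<noteq> \<one>\<^bsub>G\<^esub>}"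
        by (intro image_eqI[of z _ "\<lambda>i. z i + snd x i"]) auto
    qed
    then have "y \<in> carrier (wreath_Zk G)"
      using x by (auto simp: carrier_wr y_def intro: finite_subset)
    moreover have "y \<otimes>\<^bsub>wreath_Zk G\<^esub> x = \<one>\<^bsub>wreath_Zk G\<^esub>"
      using x by (simp add: y_def mult_wr one_wr carrier_wr fun_eq_iff)
    ultimately show "\<exists>y\<in>carrier (wreath_Zk G). y \<otimes>\<^bsub>wreath_Zk G\<^esub> x = \<one>\<^bsub>wreath_Zk G\<^esub>" by blast
  qed
qed

locale wr = G: comm_group G for G :: "('g,'b) monoid_scheme" +
  fixes \<phi> :: "((('n::finite) \<Rightarrow> int) \<Rightarrow> 'g) \<times> ('n \<Rightarrow> int) \<Rightarrow> (('n \<Rightarrow> int) \<Rightarrow> 'g) \<times> ('n \<Rightarrow> int)"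
  assumes fin: "finite (carrier G)"
    and iso: "\<phi> \<in> iso (wreath_Zk G) (wreath_Zk G)"
begin

abbreviation W where "W \<equiv> (wreath_Zk G :: ((('n \<Rightarrow> int) \<Rightarrow> 'g) \<times> ('n \<Rightarrow> int)) monoid)"
abbreviation pb where "pb \<equiv> phi_bar G \<phi>"

lemma grp: "group W" by (rule group_wr[OF G.is_group])
lemma hom: "\<phi> \<in> hom W W" using iso by (simp add: iso_def)
lemma bij: "bij_betw \<phi> (carrier W) (carrier W)" using iso by (simp add: iso_def)
lemma phi_carrier: "x \<in> carrier W \<Longrightarrow> \<phi> x \<in> carrier W" using hom by (auto simp: hom_def)
lemma phi_mult: "x \<in> carrier W \<Longrightarrow> y \<in> carrier W \<Longrightarrow> \<phi> (x \<otimes>\<^bsub>W\<^esub> y) = \<phi> x \<otimes>\<^bsub>W\<^esub> \<phi> y"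
  using hom by (auto simp: hom_def)
lemma phi_one1: "\<phi> \<one>\<^bsub>W\<^esub> = \<one>\<^bsub>W\<^esub>" using hom_one[OF hom grp grp] .
lemma zk_carrier: "zk_elt G m \<in> carrier W" by (simp add: zk_elt_def carrier_wr)
lemma sigma_carrier: "x \<in> carrier W \<Longrightarrow> sigma_elt G (fst x) \<in> carrier W"
  by (simp add: sigma_elt_def carrier_wr)
lemma decomp: "x \<in> carrier W \<Longrightarrow> x = sigma_elt G (fst x) \<otimes>\<^bsub>W\<^esub> zk_elt G (snd x)"
  by (cases x) (simp add: sigma_elt_def zk_elt_def mult_wr carrier_wr)

lemma pow_sigma: "(h, \<lambda>_. 0) [^]\<^bsub>W\<^esub> (n::nat) = (\<lambda>z. h z [^]\<^bsub>G\<^esub> n, \<lambda>_. (0::int))"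
  by (induction n) (simp_all add: mult_wr one_wr)

lemma snd_pow: "snd (x [^]\<^bsub>W\<^esub> (n::nat)) = (\<lambda>i. int n * snd x i)"
  by (induction n) (simp_all add: mult_wr one_wr algebra_simps)

lemma Npos: "Coset.order G > 0"
proof -
  have "carrier G \<noteq> {}" by blast
  then show ?thesis using fin unfolding Coset.order_def by (simp add: card_gt_0_iff)
qed

lemma torsion: "y \<in> carrier W \<Longrightarrow> snd y = (\<lambda>_. 0) \<Longrightarrow> y [^]\<^bsub>W\<^esub> Coset.order G = \<one>\<^bsub>W\<^esub>"
  apply (cases y)
  apply (simp add: pow_sigma one_wr carrier_wr)
  apply (simp add: fun_eq_iff G.pow_order_eq_1)
  done

lemma snd_zero_of_pow: "snd (x [^]\<^bsub>W\<^esub> Coset.order G) = (\<lambda>_. 0) \<Longrightarrow> snd x = (\<lambda>_. 0)"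
  using Npos by (auto simp: snd_pow fun_eq_iff)

lemma snd_phi_sigma: "x \<in> carrier W \<Longrightarrow> snd (\<phi> (sigma_elt G (fst x))) = (\<lambda>_. 0)"
proof -
  assume x: "x \<in> carrier W"
  let ?s = "sigma_elt G (fst x)"
  have s: "?s \<in> carrier W" using sigma_carrier[OF x] .
  have "?s [^]\<^bsub>W\<^esub> Coset.order G = \<one>\<^bsub>W\<^esub>" by (rule torsion[OF s]) (simp add: sigma_elt_def)
  then have "\<phi> ?s [^]\<^bsub>W\<^esub> Coset.order G = \<one>\<^bsub>W\<^esub>"
    using hom_nat_pow[OF hom s grp grp, of "Coset.order G"] phi_one1 by simp
  then have "snd (\<phi> ?s [^]\<^bsub>W\<^esub> Coset.order G) = (\<lambda>_. 0)" by (simp only: one_wr snd_conv)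
  then show ?thesis by (rule snd_zero_of_pow)
qed

lemma snd_phi: "x \<in> carrier W \<Longrightarrow> snd (\<phi> x) = pb (snd x)"
proof -
  assume x: "x \<in> carrier W"
  have "\<phi> x = \<phi> (sigma_elt G (fst x)) \<otimes>\<^bsub>W\<^esub> \<phi> (zk_elt G (snd x))"
    using decomp[OF x] phi_mult[OF sigma_carrier[OF x] zk_carrier] by metis
  then show ?thesis using snd_phi_sigma[OF x] by (simp add: mult_wr phi_bar_def)
qed

lemma zk_mult: "zk_elt G m \<otimes>\<^bsub>W\<^esub> zk_elt G n = zk_elt G (\<lambda>i. m i + n i)"
  by (simp add: zk_elt_def mult_wr)

lemma pb_add: "pb (\<lambda>i. m i + n i) = (\<lambda>i. pb m i + pb n i)"
proof -
  have "\<phi> (zk_elt G (\<lambda>i. m i + n i)) = \<phi> (zk_elt G m) \<otimes>\<^bsub>W\<^esub> \<phi> (zk_elt G n)"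
    using phi_mult[OF zk_carrier zk_carrier, of m n] zk_mult by metis
  then show ?thesis by (simp add: phi_bar_def mult_wr)
qed

lemma pb_additive: "additive_Z pb"
  using pb_add by (simp add: additive_Z_def)

lemma pb_inj0: "pb m = (\<lambda>_. 0) \<Longrightarrow> m = (\<lambda>_. 0)"
proof -
  assume m: "pb m = (\<lambda>_. 0)"
  let ?z = "zk_elt G m :: ((('n \<Rightarrow> int) \<Rightarrow> 'g) \<times> ('n \<Rightarrow> int))"
  have "\<phi> ?z [^]\<^bsub>W\<^esub> Coset.order G = \<one>\<^bsub>W\<^esub>"
    using torsion[OF phi_carrier[OF zk_carrier]] m by (simp add: phi_bar_def)
  then have "\<phi> (?z [^]\<^bsub>W\<^esub> Coset.order G) = \<phi> \<one>\<^bsub>W\<^esub>"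
    using hom_nat_pow[OF hom zk_carrier grp grp, of m "Coset.order G"] phi_one1 by simp
  moreover have "?z [^]\<^bsub>W\<^esub> Coset.order G \<in> carrier W"
    using group.is_monoid[OF grp] zk_carrier by (simp add: monoid.nat_pow_closed)
  moreover have "\<one>\<^bsub>W\<^esub> \<in> carrier W" by (simp add: one_wr carrier_wr)
  ultimately have "?z [^]\<^bsub>W\<^esub> Coset.order G = \<one>\<^bsub>W\<^esub>"
    using bij by (auto simp: bij_betw_def inj_on_def)
  then have "snd (?z [^]\<^bsub>W\<^esub> Coset.order G) = (\<lambda>_. 0)" by (simp add: one_wr)
  then show ?thesis using snd_zero_of_pow[of "zk_elt G m"] by (simp add: zk_elt_def)
qed

lemma pb_surj: "\<exists>m. pb m = p"
proof -
  have "zk_elt G p \<in> \<phi> ` carrier W" using bij zk_carrier by (simp add: bij_betw_def)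
  then obtain x where x: "x \<in> carrier W" "zk_elt G p = \<phi> x" by blast
  then have "snd (zk_elt G p) = snd (\<phi> x)" by simp
  then have "pb (snd x) = p" using snd_phi[OF x(1)] by (simp add: zk_elt_def)
  then show ?thesis by blast
qed


end


lemma twisted_equiv:
  fixes \<Gamma> (structure)
  assumes grp: "group \<Gamma>" and h: "\<psi> \<in> hom \<Gamma> \<Gamma>"
  shows "equiv (carrier \<Gamma>) (twisted_conj \<Gamma> \<psi>)"
proof -
  interpret group \<Gamma> by fact
  interpret gh: group_hom \<Gamma> \<Gamma> \<psi> by (simp add: group_hom_def group_hom_axioms_def grp h)
  have pinv: "\<And>g. g \<in> carrier \<Gamma> \<Longrightarrow> \<psi> (inv g) = inv (\<psi> g)" by (rule gh.hom_inv)
  have pc: "\<And>g. g \<in> carrier \<Gamma> \<Longrightarrow> \<psi> g \<in> carrier \<Gamma>" using h by (auto simp: hom_def)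
  have pm: "\<And>g k. g \<in> carrier \<Gamma> \<Longrightarrow> k \<in> carrier \<Gamma> \<Longrightarrow> \<psi> (g \<otimes> k) = \<psi> g \<otimes> \<psi> k" using h by (auto simp: hom_def)
  show ?thesis
  proof (rule equivI)
    show "twisted_conj \<Gamma> \<psi> \<subseteq> carrier \<Gamma> \<times> carrier \<Gamma>" by (auto simp: twisted_conj_def)
  next
    show "refl_on (carrier \<Gamma>) (twisted_conj \<Gamma> \<psi>)"
    proof (rule refl_onI)
      fix x assume x: "x \<in> carrier \<Gamma>"
      have "x = \<one> \<otimes> x \<otimes> \<psi> (inv \<one>)" using x by simp
      then show "(x, x) \<in> twisted_conj \<Gamma> \<psi>" using x unfolding twisted_conj_def by blast
    qed
  next
    show "sym (twisted_conj \<Gamma> \<psi>)"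
    proof (rule symI)
      fix x y assume "(x, y) \<in> twisted_conj \<Gamma> \<psi>"
      then obtain g where x: "x \<in> carrier \<Gamma>" and y: "y \<in> carrier \<Gamma>" and g: "g \<in> carrier \<Gamma>"
        and e: "y = g \<otimes> x \<otimes> \<psi> (inv g)" by (auto simp: twisted_conj_def)
      have "inv g \<otimes> y \<otimes> \<psi> (inv (inv g)) = x"
        using x g pc by (simp add: e pinv m_assoc flip: m_assoc[of "inv g" g x])
      then show "(y, x) \<in> twisted_conj \<Gamma> \<psi>" using x y g unfolding twisted_conj_def
        by (metis (mono_tags, lifting) case_prodI inv_closed mem_Collect_eq)
    qed
  next
    show "trans (twisted_conj \<Gamma> \<psi>)"
    proof (rule transI)
      fix x y z assume "(x, y) \<in> twisted_conj \<Gamma> \<psi>" "(y, z) \<in> twisted_conj \<Gamma> \<psi>"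
      then obtain g k where x: "x \<in> carrier \<Gamma>" and y: "y \<in> carrier \<Gamma>" and z: "z \<in> carrier \<Gamma>"
        and g: "g \<in> carrier \<Gamma>" and k: "k \<in> carrier \<Gamma>"
        and e1: "y = g \<otimes> x \<otimes> \<psi> (inv g)" and e2: "z = k \<otimes> y \<otimes> \<psi> (inv k)"
        by (auto simp: twisted_conj_def)
      have "(k \<otimes> g) \<otimes> x \<otimes> \<psi> (inv (k \<otimes> g)) = z"
        using x g k pc by (simp add: e1 e2 pinv pm m_assoc inv_mult_group)
      then show "(x, z) \<in> twisted_conj \<Gamma> \<psi>" using x z g k unfolding twisted_conj_def
        by (metis (mono_tags, lifting) case_prodI m_closed mem_Collect_eq)
    qed
  qed
qed

lemma quot_bij:
  assumes eq: "equiv A EE" and TT: "TT \<subseteq> A" and reach: "\<And>x. x \<in> A \<Longrightarrow> \<exists>t\<in>TT. (x, t) \<in> EE"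
  shows "bij_betw (\<lambda>P. P \<inter> TT) (A // EE) (TT // (EE \<inter> TT \<times> TT))"
proof -
  have cls: "EE `` {x} \<inter> TT = (EE \<inter> TT \<times> TT) `` {t}" if "x \<in> A" "t \<in> TT" "(x, t) \<in> EE" for x t
  proof -
    have "EE `` {x} = EE `` {t}" using equiv_class_eq[OF eq that(3)] .
    then show ?thesis using that by auto
  qed
  show ?thesis
  proof (rule bij_betw_imageI)
    show "inj_on (\<lambda>P. P \<inter> TT) (A // EE)"
    proof (rule inj_onI)
      fix P Q assume P: "P \<in> A // EE" and Q: "Q \<in> A // EE" and e: "P \<inter> TT = Q \<inter> TT"
      from P obtain x where x: "x \<in> A" "P = EE `` {x}" by (auto elim: quotientE)
      from Q obtain y where y: "y \<in> A" "Q = EE `` {y}" by (auto elim: quotientE)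
      obtain t where t: "t \<in> TT" "(x, t) \<in> EE" using reach[OF x(1)] by blast
      have "t \<in> Q" using e t x by auto
      then have "(y, t) \<in> EE" using y by auto
      then show "P = Q" using x y t equiv_class_eq[OF eq] by metis
    qed
  next
    show "(\<lambda>P. P \<inter> TT) ` (A // EE) = TT // (EE \<inter> TT \<times> TT)"
    proof
      show "(\<lambda>P. P \<inter> TT) ` (A // EE) \<subseteq> TT // (EE \<inter> TT \<times> TT)"
      proof
        fix S assume "S \<in> (\<lambda>P. P \<inter> TT) ` (A // EE)"
        then obtain x where x: "x \<in> A" "S = EE `` {x} \<inter> TT" by (auto elim: quotientE)
        obtain t where t: "t \<in> TT" "(x, t) \<in> EE" using reach[OF x(1)] by blast
        show "S \<in> TT // (EE \<inter> TT \<times> TT)" using cls[OF x(1) t] x t by (auto intro: quotientI)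
      qed
    next
      show "TT // (EE \<inter> TT \<times> TT) \<subseteq> (\<lambda>P. P \<inter> TT) ` (A // EE)"
      proof
        fix S assume "S \<in> TT // (EE \<inter> TT \<times> TT)"
        then obtain t where t: "t \<in> TT" "S = (EE \<inter> TT \<times> TT) `` {t}" by (auto elim: quotientE)
        have tA: "t \<in> A" using t TT by auto
        have "(t, t) \<in> EE" using eq tA by (auto simp: equiv_def refl_on_def)
        then have "S = EE `` {t} \<inter> TT" using cls[OF tA t(1)] t by simp
        moreover have "EE `` {t} \<in> A // EE" using tA by (rule quotientI)
        ultimately show "S \<in> (\<lambda>P. P \<inter> TT) ` (A // EE)" by blast
      qed
    qed
  qed
qed


context wr begin
lemma phi_one_eq: "x \<in> carrier W \<Longrightarrow> phi_one G \<phi> x = (fst (\<phi> (sigma_elt G (fst x))), pb (snd x))"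
proof -
  assume x: "x \<in> carrier W"
  have c: "\<And>z. fst (\<phi> (sigma_elt G (fst x))) z \<in> carrier G"
    using phi_carrier[OF sigma_carrier[OF x]] by (simp add: carrier_wr)
  have e: "\<phi> (sigma_elt G (fst x)) = (fst (\<phi> (sigma_elt G (fst x))), \<lambda>_. 0)"
    using snd_phi_sigma[OF x] by (metis prod.collapse)
  have "phi_one G \<phi> x = \<phi> (sigma_elt G (fst x)) \<otimes>\<^bsub>W\<^esub> zk_elt G (pb (snd x))"
    unfolding phi_one_def by (simp add: case_prod_beta)
  also have "\<dots> = (fst (\<phi> (sigma_elt G (fst x))), \<lambda>_. 0) \<otimes>\<^bsub>W\<^esub> zk_elt G (pb (snd x))"
    by (subst e) (rule refl)
  also have "\<dots> = (fst (\<phi> (sigma_elt G (fst x))), pb (snd x))"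
    using c by (simp add: mult_wr zk_elt_def)
  finally show ?thesis .
qed

lemma shift_carrier:
  assumes x: "x \<in> carrier W"
  shows "sigma_elt G (\<lambda>z. fst x (\<lambda>i. z i - m i)) \<in> carrier W"
proof -
  have "{z. fst x (\<lambda>i. z i - m i) \<noteq> \<one>\<^bsub>G\<^esub>} \<subseteq> (\<lambda>z i. z i + m i) ` {z. fst x z \<noteq> \<one>\<^bsub>G\<^esub>}"
  proof
    fix z assume "z \<in> {z. fst x (\<lambda>i. z i - m i) \<noteq> \<one>\<^bsub>G\<^esub>}"
    then show "z \<in> (\<lambda>z i. z i + m i) ` {z. fst x z \<noteq> \<one>\<^bsub>G\<^esub>}"
      by (intro image_eqI[of z _ "\<lambda>i. z i - m i"]) auto
  qed
  then show ?thesis using x by (auto simp: sigma_elt_def carrier_wr intro: finite_subset)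
qed

lemma phi_sigma_pair: "x \<in> carrier W \<Longrightarrow> \<phi> (sigma_elt G (fst x)) = (fst (\<phi> (sigma_elt G (fst x))), \<lambda>_. 0)"
  using snd_phi_sigma by (metis prod.collapse)

lemma phi_shift:
  assumes x: "x \<in> carrier W"
  shows "fst (\<phi> (sigma_elt G (\<lambda>z. fst x (\<lambda>i. z i - m i))))
       = (\<lambda>z. fst (\<phi> (sigma_elt G (fst x))) (\<lambda>i. z i - pb m i))"
proof -
  let ?h = "\<lambda>z. fst x (\<lambda>i. z i - m i)"
  have sc: "sigma_elt G ?h \<in> carrier W" by (rule shift_carrier[OF x])
  have x': "sigma_elt G (fst x) \<in> carrier W" by (rule sigma_carrier[OF x])
  have c: "\<And>z. fst x z \<in> carrier G" using x by (simp add: carrier_wr)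
  have "sigma_elt G ?h \<otimes>\<^bsub>W\<^esub> zk_elt G m = zk_elt G m \<otimes>\<^bsub>W\<^esub> sigma_elt G (fst x)"
    using c by (simp add: sigma_elt_def zk_elt_def mult_wr)
  then have eq: "\<phi> (sigma_elt G ?h) \<otimes>\<^bsub>W\<^esub> \<phi> (zk_elt G m) = \<phi> (zk_elt G m) \<otimes>\<^bsub>W\<^esub> \<phi> (sigma_elt G (fst x))"
    using phi_mult[OF sc zk_carrier] phi_mult[OF zk_carrier x'] by metis
  have shc: "sigma_elt G ?h \<in> carrier W" by (rule sc)
  have e1: "\<phi> (sigma_elt G ?h) = (fst (\<phi> (sigma_elt G ?h)), \<lambda>_. 0)"
    using phi_sigma_pair[OF sc] by (simp add: sigma_elt_def)
  have e2: "\<phi> (sigma_elt G (fst x)) = (fst (\<phi> (sigma_elt G (fst x))), \<lambda>_. 0)"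
    by (rule phi_sigma_pair[OF x])
  have e3: "\<phi> (zk_elt G m) = (fst (\<phi> (zk_elt G m)), pb m)"
    by (simp add: phi_bar_def)
  define b where "b = fst (\<phi> (sigma_elt G ?h))"
  define a where "a = fst (\<phi> (sigma_elt G (fst x)))"
  define s where "s = fst (\<phi> (zk_elt G m))"
  have cb: "\<And>z. b z \<in> carrier G" using phi_carrier[OF sc] by (simp add: b_def carrier_wr)
  have ca: "\<And>z. a z \<in> carrier G" using phi_carrier[OF x'] by (simp add: a_def carrier_wr)
  have cs: "\<And>z. s z \<in> carrier G" using phi_carrier[OF zk_carrier] by (simp add: s_def carrier_wr)
  have "(b, \<lambda>_. 0) \<otimes>\<^bsub>W\<^esub> (s, pb m) = (s, pb m) \<otimes>\<^bsub>W\<^esub> (a, \<lambda>_. 0)"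
    using eq e1 e2 e3 unfolding a_def b_def s_def by metis
  then have "\<And>z. b z \<otimes>\<^bsub>G\<^esub> s z = s z \<otimes>\<^bsub>G\<^esub> a (\<lambda>i. z i - pb m i)"
    by (simp add: mult_wr fun_eq_iff)
  then have "\<And>z. b z \<otimes>\<^bsub>G\<^esub> s z = a (\<lambda>i. z i - pb m i) \<otimes>\<^bsub>G\<^esub> s z"
    using G.m_comm ca cs by metis
  then have "\<And>z. b z = a (\<lambda>i. z i - pb m i)"
    using cb ca cs G.right_cancel by metis
  then show ?thesis unfolding a_def b_def by (simp add: fun_eq_iff)
qed

lemma phi_one_carrier: "x \<in> carrier W \<Longrightarrow> phi_one G \<phi> x \<in> carrier W"
  using phi_one_eq phi_carrier[OF sigma_carrier] by (simp add: carrier_wr)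

lemma phi_one_mult:
  assumes x: "x \<in> carrier W" and y: "y \<in> carrier W"
  shows "phi_one G \<phi> (x \<otimes>\<^bsub>W\<^esub> y) = phi_one G \<phi> x \<otimes>\<^bsub>W\<^esub> phi_one G \<phi> y"
proof -
  have xy: "x \<otimes>\<^bsub>W\<^esub> y \<in> carrier W" using x y group.is_monoid[OF grp] by (simp add: monoid.m_closed)
  let ?h = "\<lambda>z. fst y (\<lambda>i. z i - snd x i)"
  have cx: "\<And>z. fst x z \<in> carrier G" using x by (simp add: carrier_wr)
  have "sigma_elt G (fst (x \<otimes>\<^bsub>W\<^esub> y)) = sigma_elt G (fst x) \<otimes>\<^bsub>W\<^esub> sigma_elt G ?h"
    by (simp add: sigma_elt_def mult_wr)
  then have m1: "\<phi> (sigma_elt G (fst (x \<otimes>\<^bsub>W\<^esub> y))) = \<phi> (sigma_elt G (fst x)) \<otimes>\<^bsub>W\<^esub> \<phi> (sigma_elt G ?h)"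
    using phi_mult[OF sigma_carrier[OF x] shift_carrier[OF y]] by metis
  define a where "a = fst (\<phi> (sigma_elt G (fst x)))"
  define b where "b = fst (\<phi> (sigma_elt G (fst y)))"
  have ea: "\<phi> (sigma_elt G (fst x)) = (a, \<lambda>_. 0)" unfolding a_def by (rule phi_sigma_pair[OF x])
  have eh: "\<phi> (sigma_elt G ?h) = (\<lambda>z. b (\<lambda>i. z i - pb (snd x) i), \<lambda>_. 0)"
  proof -
    have p: "snd (\<phi> (sigma_elt G ?h)) = (\<lambda>_. 0)"
      using snd_phi_sigma[OF shift_carrier[OF y]] by (simp add: sigma_elt_def)
    have q: "fst (\<phi> (sigma_elt G ?h)) = (\<lambda>z. b (\<lambda>i. z i - pb (snd x) i))"
      using phi_shift[OF y, of "snd x"] unfolding b_def .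
    show ?thesis using p q by (metis prod.collapse)
  qed
  have e: "fst (\<phi> (sigma_elt G (fst (x \<otimes>\<^bsub>W\<^esub> y)))) =
     (\<lambda>z. a z \<otimes>\<^bsub>G\<^esub> b (\<lambda>i. z i - pb (snd x) i))"
    unfolding m1 ea eh by (simp add: mult_wr)
  show ?thesis
    using phi_one_eq[OF xy] phi_one_eq[OF x] phi_one_eq[OF y] e pb_add
    unfolding a_def[symmetric] b_def[symmetric]
    by (simp add: mult_wr)
qed

lemma phi_one_hom: "phi_one G \<phi> \<in> hom W W"
  unfolding hom_def using phi_one_carrier phi_one_mult by auto

lemma pb_neg: "pb (\<lambda>i. - m i) = (\<lambda>i. - pb m i)"
  by (rule additive_neg[OF pb_additive])

lemma pb_zero: "pb (\<lambda>_. 0) = (\<lambda>_. 0)"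
  by (rule additive_zero[OF pb_additive])

lemma pb_inj: "pb m = pb n \<Longrightarrow> m = n"
proof -
  assume e: "pb m = pb n"
  have "pb (\<lambda>i. m i + - n i) = (\<lambda>i. pb m i + pb (\<lambda>i. - n i) i)" by (rule pb_add)
  also have "\<dots> = (\<lambda>_. 0)" using e pb_neg by simp
  finally have "(\<lambda>i. m i + - n i) = (\<lambda>_. 0)" by (rule pb_inj0)
  then show "m = n" by (simp add: fun_eq_iff)
qed

lemma phi_one_iso: "phi_one G \<phi> \<in> iso W W"
proof -
  have inj: "inj_on (phi_one G \<phi>) (carrier W)"
  proof (rule inj_onI)
    fix x y assume x: "x \<in> carrier W" and y: "y \<in> carrier W" and e: "phi_one G \<phi> x = phi_one G \<phi> y"
    then have e1: "fst (\<phi> (sigma_elt G (fst x))) = fst (\<phi> (sigma_elt G (fst y)))"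
      and e2: "pb (snd x) = pb (snd y)" using phi_one_eq by auto
    have "\<phi> (sigma_elt G (fst x)) = \<phi> (sigma_elt G (fst y))"
      using e1 phi_sigma_pair[OF x] phi_sigma_pair[OF y] by metis
    then have "sigma_elt G (fst x) = sigma_elt G (fst y)"
      using bij sigma_carrier[OF x] sigma_carrier[OF y] by (auto simp: bij_betw_def inj_on_def)
    then have "fst x = fst y" by (simp add: sigma_elt_def)
    moreover have "snd x = snd y" using pb_inj[OF e2] .
    ultimately show "x = y" by (rule prod_eqI)
  qed
  have "carrier W \<subseteq> phi_one G \<phi> ` carrier W"
  proof
    fix y assume y: "y \<in> carrier W"
    have "sigma_elt G (fst y) \<in> \<phi> ` carrier W" using bij sigma_carrier[OF y] by (simp add: bij_betw_def)
    then obtain x where x: "x \<in> carrier W" and ex: "\<phi> x = sigma_elt G (fst y)" by auto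
    have "pb (snd x) = pb (\<lambda>_. 0)" using snd_phi[OF x] ex pb_zero by (simp add: sigma_elt_def)
    then have "snd x = (\<lambda>_. 0)" by (rule pb_inj)
    then have xs: "sigma_elt G (fst x) = x" by (simp add: sigma_elt_def prod_eq_iff)
    obtain m where m: "pb m = snd y" using pb_surj by blast
    have zc: "(fst x, m) \<in> carrier W" using x by (simp add: carrier_wr)
    have "phi_one G \<phi> (fst x, m) = (fst (\<phi> x), snd y)" using phi_one_eq[OF zc] xs m by simp
    also have "\<dots> = y" using ex by (simp add: sigma_elt_def)
    finally show "y \<in> phi_one G \<phi> ` carrier W" using zc by (metis image_eqI)
  qed
  then have "phi_one G \<phi> ` carrier W = carrier W" using phi_one_carrier by auto
  then show ?thesis using inj phi_one_hom by (simp add: iso_def bij_betw_def)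
qed


definition Dm where "Dm m = (\<lambda>i. m i - pb m i)"

lemma Dm_add: "Dm (\<lambda>i. m i + n i) = (\<lambda>i. Dm m i + Dm n i)"
  using pb_add by (simp add: Dm_def fun_eq_iff)

lemma Dm_neg: "Dm (\<lambda>i. - m i) = (\<lambda>i. - Dm m i)"
  using pb_neg by (simp add: Dm_def fun_eq_iff)

lemma Dm_zero: "Dm (\<lambda>_. 0) = (\<lambda>_. 0)"
  using pb_zero by (simp add: Dm_def fun_eq_iff)

lemma Dm_additive: "additive_Z Dm"
  using Dm_add by (simp add: additive_Z_def)

lemma snd_mult: "snd (x \<otimes>\<^bsub>W\<^esub> y) = (\<lambda>i. snd x i + snd y i)"
  by (simp add: mult_wr)

lemma snd_inv: "g \<in> carrier W \<Longrightarrow> snd (inv\<^bsub>W\<^esub> g) = (\<lambda>i. - snd g i)"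
proof -
  assume g: "g \<in> carrier W"
  have "g \<otimes>\<^bsub>W\<^esub> inv\<^bsub>W\<^esub> g = \<one>\<^bsub>W\<^esub>" using group.r_inv[OF grp g] .
  then have "snd (g \<otimes>\<^bsub>W\<^esub> inv\<^bsub>W\<^esub> g) = (\<lambda>_. 0)" by (simp add: one_wr)
  then have "\<And>i. snd g i + snd (inv\<^bsub>W\<^esub> g) i = 0" by (simp add: snd_mult fun_eq_iff)
  then show ?thesis by (simp add: fun_eq_iff eq_neg_iff_add_eq_0 add.commute)
qed

definition cls where "cls n = {r. \<exists>m. r = (\<lambda>i. n i + Dm m i)}"
definition rep where "rep n = (SOME r. r \<in> cls n)"
definition TT where "TT = {x \<in> carrier W. rep (snd x) = snd x}"

lemma self_cls: "n \<in> cls n"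
  unfolding cls_def mem_Collect_eq by (rule exI[of _ "\<lambda>_. 0"]) (simp add: Dm_zero)

lemma rep_cls: "rep n \<in> cls n"
  unfolding rep_def by (rule someI[of "\<lambda>r. r \<in> cls n" n, OF self_cls])

lemma cls_eq: "r \<in> cls n \<Longrightarrow> cls r = cls n"
proof -
  assume "r \<in> cls n"
  then obtain m where m: "r = (\<lambda>i. n i + Dm m i)" by (auto simp: cls_def)
  show "cls r = cls n"
  proof
    show "cls r \<subseteq> cls n"
    proof
      fix q assume "q \<in> cls r"
      then obtain m' where "q = (\<lambda>i. r i + Dm m' i)" by (auto simp: cls_def)
      then have "q = (\<lambda>i. n i + Dm (\<lambda>i. m i + m' i) i)" using m Dm_add by (simp add: add.assoc)
      then show "q \<in> cls n" by (auto simp: cls_def)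
    qed
  next
    show "cls n \<subseteq> cls r"
    proof
      fix q assume "q \<in> cls n"
      then obtain m' where "q = (\<lambda>i. n i + Dm m' i)" by (auto simp: cls_def)
      moreover have "Dm (\<lambda>i. m' i + - m i) = (\<lambda>i. Dm m' i + - Dm m i)" by (simp only: Dm_add Dm_neg)
      ultimately have "q = (\<lambda>i. r i + Dm (\<lambda>i. m' i + - m i) i)" using m by (simp add: fun_eq_iff)
      then show "q \<in> cls r" by (auto simp: cls_def)
    qed
  qed
qed

lemma rep_eq: "r \<in> cls n \<Longrightarrow> rep r = rep n"
  using cls_eq by (simp add: rep_def)

lemma rep_rep: "rep (rep n) = rep n"
  using rep_eq[OF rep_cls] .

lemma TT_sub: "TT \<subseteq> carrier W" by (auto simp: TT_def)

context
  fixes \<psi>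
  assumes psi_hom: "\<psi> \<in> hom W W" and psi_snd: "\<And>x. x \<in> carrier W \<Longrightarrow> snd (\<psi> x) = pb (snd x)"
begin

lemma snd_tw:
  assumes g: "g \<in> carrier W" and x: "x \<in> carrier W"
  shows "snd (g \<otimes>\<^bsub>W\<^esub> x \<otimes>\<^bsub>W\<^esub> \<psi> (inv\<^bsub>W\<^esub> g)) = (\<lambda>i. snd x i + Dm (snd g) i)"
proof -
  have ig: "inv\<^bsub>W\<^esub> g \<in> carrier W" using group.inv_closed[OF grp g] .
  show ?thesis
    using psi_snd[OF ig] snd_inv[OF g] pb_neg[of "snd g"]
    by (simp add: snd_mult Dm_def fun_eq_iff)
qed

lemma tw_mem: "g \<in> carrier W \<Longrightarrow> x \<in> carrier W \<Longrightarrow> g \<otimes>\<^bsub>W\<^esub> x \<otimes>\<^bsub>W\<^esub> \<psi> (inv\<^bsub>W\<^esub> g) \<in> carrier W"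
proof -
  assume g: "g \<in> carrier W" and x: "x \<in> carrier W"
  have ig: "inv\<^bsub>W\<^esub> g \<in> carrier W" using group.inv_closed[OF grp g] .
  have pig: "\<psi> (inv\<^bsub>W\<^esub> g) \<in> carrier W" using psi_hom ig by (auto simp: hom_def)
  show ?thesis using monoid.m_closed[OF group.is_monoid[OF grp]] g x pig by blast
qed

lemma fin_cov:
  assumes fin: "finite (carrier W // twisted_conj W \<psi>)"
  shows "\<exists>j::int. j > 0 \<and> (\<exists>w. Dm w = (\<lambda>i. j * v i))"
proof -
  let ?E = "twisted_conj W \<psi>"
  define f where "f j = ?E `` {zk_elt G (\<lambda>i. int j * v i)}" for j :: nat
  have "range f \<subseteq> carrier W // ?E" unfolding f_def using zk_carrier by (auto intro: quotientI)
  then have "finite (range f)" using fin finite_subset by blast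
  then have "\<not> inj f" using finite_imageD infinite_UNIV_nat by blast
  then obtain j1 j2 where ne: "j1 \<noteq> j2" and fe: "f j1 = f j2" by (auto simp: inj_def)
  have key: "\<exists>w. Dm w = (\<lambda>i. (int b - int a) * v i)" if fab: "f a = f b" for a b
  proof -
    have eqv: "equiv (carrier W) ?E" by (rule twisted_equiv[OF grp psi_hom])
    have "zk_elt G (\<lambda>i. int b * v i) \<in> f b" unfolding f_def
      using eqv zk_carrier by (auto simp: equiv_def refl_on_def)
    then have "zk_elt G (\<lambda>i. int b * v i) \<in> f a" using fab by simp
    then obtain g where g: "g \<in> carrier W" and
      e: "zk_elt G (\<lambda>i. int b * v i) = g \<otimes>\<^bsub>W\<^esub> zk_elt G (\<lambda>i. int a * v i) \<otimes>\<^bsub>W\<^esub> \<psi> (inv\<^bsub>W\<^esub> g)"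
      unfolding f_def twisted_conj_def by blast
    have "(\<lambda>i. int b * v i) = (\<lambda>i. int a * v i + Dm (snd g) i)"
      using arg_cong[OF e, of snd] snd_tw[OF g zk_carrier] by (simp add: zk_elt_def)
    then have "Dm (snd g) = (\<lambda>i. (int b - int a) * v i)" by (simp add: fun_eq_iff algebra_simps)
    then show ?thesis by blast
  qed
  show ?thesis
  proof (cases "j1 < j2")
    case True then show ?thesis using key[OF fe] by force
  next
    case False then have "j2 < j1" using ne by simp
    then show ?thesis using key[OF fe[symmetric]] by force
  qed
qed

lemma fin_inj: "finite (carrier W // twisted_conj W \<psi>) \<Longrightarrow> Dm m = (\<lambda>_. 0) \<Longrightarrow> m = (\<lambda>_. 0)"
  using additive_inj[OF Dm_additive] fin_cov by blast

lemma reach: "x \<in> carrier W \<Longrightarrow> \<exists>t\<in>TT. (x, t) \<in> twisted_conj W \<psi>"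
proof -
  assume x: "x \<in> carrier W"
  obtain m where m: "rep (snd x) = (\<lambda>i. snd x i + Dm m i)" using rep_cls by (auto simp: cls_def)
  let ?g = "zk_elt G m :: ((('n \<Rightarrow> int) \<Rightarrow> 'g) \<times> ('n \<Rightarrow> int))"
  let ?t = "?g \<otimes>\<^bsub>W\<^esub> x \<otimes>\<^bsub>W\<^esub> \<psi> (inv\<^bsub>W\<^esub> ?g)"
  have tc: "?t \<in> carrier W" by (rule tw_mem[OF zk_carrier x])
  have "snd ?t = rep (snd x)" using snd_tw[OF zk_carrier x] m by (simp add: zk_elt_def)
  then have "rep (snd ?t) = snd ?t" using rep_rep by simp
  then have "?t \<in> TT" using tc by (simp add: TT_def)
  moreover have "(x, ?t) \<in> twisted_conj W \<psi>" using x tc zk_carrier unfolding twisted_conj_def by blast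
  ultimately show ?thesis by blast
qed

lemma onT:
  assumes ki: "\<And>m. Dm m = (\<lambda>_. 0) \<Longrightarrow> m = (\<lambda>_. 0)"
    and x: "x \<in> TT" and y: "y \<in> TT"
  shows "(x, y) \<in> twisted_conj W \<psi> \<longleftrightarrow> (\<exists>g\<in>carrier W. snd g = (\<lambda>_. 0) \<and> y = g \<otimes>\<^bsub>W\<^esub> x \<otimes>\<^bsub>W\<^esub> \<psi> (inv\<^bsub>W\<^esub> g))"
proof
  assume "(x, y) \<in> twisted_conj W \<psi>"
  then obtain g where g: "g \<in> carrier W" and e: "y = g \<otimes>\<^bsub>W\<^esub> x \<otimes>\<^bsub>W\<^esub> \<psi> (inv\<^bsub>W\<^esub> g)"
    unfolding twisted_conj_def by blast
  have xc: "x \<in> carrier W" using x TT_sub by blast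
  have sy: "snd y = (\<lambda>i. snd x i + Dm (snd g) i)" using snd_tw[OF g xc] e by simp
  then have "snd y \<in> cls (snd x)" by (auto simp: cls_def)
  then have "rep (snd y) = rep (snd x)" by (rule rep_eq)
  then have "snd y = snd x" using x y by (simp add: TT_def)
  then have "Dm (snd g) = (\<lambda>_. 0)" using sy by (simp add: fun_eq_iff)
  then have "snd g = (\<lambda>_. 0)" by (rule ki)
  then show "\<exists>g\<in>carrier W. snd g = (\<lambda>_. 0) \<and> y = g \<otimes>\<^bsub>W\<^esub> x \<otimes>\<^bsub>W\<^esub> \<psi> (inv\<^bsub>W\<^esub> g)"
    using g e by blast
next
  assume "\<exists>g\<in>carrier W. snd g = (\<lambda>_. 0) \<and> y = g \<otimes>\<^bsub>W\<^esub> x \<otimes>\<^bsub>W\<^esub> \<psi> (inv\<^bsub>W\<^esub> g)"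
  then show "(x, y) \<in> twisted_conj W \<psi>" using x y TT_sub unfolding twisted_conj_def by blast
qed

end


lemma snd_phi_one: "x \<in> carrier W \<Longrightarrow> snd (phi_one G \<phi> x) = pb (snd x)"
  using phi_one_eq by simp

lemma inv_agree:
  assumes g: "g \<in> carrier W" and sg: "snd g = (\<lambda>_. 0)"
  shows "phi_one G \<phi> (inv\<^bsub>W\<^esub> g) = \<phi> (inv\<^bsub>W\<^esub> g)"
proof -
  let ?i = "inv\<^bsub>W\<^esub> g"
  have ig: "?i \<in> carrier W" using group.inv_closed[OF grp g] .
  have si: "snd ?i = (\<lambda>_. 0)" using snd_inv[OF g] sg by simp
  then have s: "sigma_elt G (fst ?i) = ?i" by (simp add: sigma_elt_def prod_eq_iff)
  have "phi_one G \<phi> ?i = (fst (\<phi> ?i), (\<lambda>_. 0))" using phi_one_eq[OF ig] s si pb_zero by simp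
  also have "\<dots> = \<phi> ?i" using snd_phi[OF ig] si pb_zero by (simp add: prod_eq_iff)
  finally show ?thesis .
qed

lemma restr_eq:
  assumes ki: "\<And>m. Dm m = (\<lambda>_. 0) \<Longrightarrow> m = (\<lambda>_. 0)"
  shows "twisted_conj W \<phi> \<inter> TT \<times> TT = twisted_conj W (phi_one G \<phi>) \<inter> TT \<times> TT"
proof -
  have "(x, y) \<in> twisted_conj W \<phi> \<longleftrightarrow> (x, y) \<in> twisted_conj W (phi_one G \<phi>)"
    if x: "x \<in> TT" and y: "y \<in> TT" for x y
    using onT[OF hom snd_phi ki x y] onT[OF phi_one_hom snd_phi_one ki x y] inv_agree by auto
  then show ?thesis by auto
qed

lemma reid_eq: "reidemeister W \<phi> = reidemeister W (phi_one G \<phi>)"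
proof -
  let ?E = "twisted_conj W \<phi>" and ?E1 = "twisted_conj W (phi_one G \<phi>)"
  show ?thesis
  proof (cases "finite (carrier W // ?E) \<or> finite (carrier W // ?E1)")
    case True
    have ki: "\<And>m. Dm m = (\<lambda>_. 0) \<Longrightarrow> m = (\<lambda>_. 0)"
      using True fin_inj[OF hom snd_phi] fin_inj[OF phi_one_hom snd_phi_one] by blast
    have b1: "bij_betw (\<lambda>P. P \<inter> TT) (carrier W // ?E) (TT // (?E \<inter> TT \<times> TT))"
      by (rule quot_bij[OF twisted_equiv[OF grp hom] TT_sub reach[OF hom snd_phi]])
    have b2: "bij_betw (\<lambda>P. P \<inter> TT) (carrier W // ?E1) (TT // (?E \<inter> TT \<times> TT))"
      using quot_bij[OF twisted_equiv[OF grp phi_one_hom] TT_sub reach[OF phi_one_hom snd_phi_one]]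
        restr_eq[OF ki] by simp
    have "card (carrier W // ?E) = card (carrier W // ?E1)"
      using bij_betw_same_card[OF b1] bij_betw_same_card[OF b2] by simp
    moreover have "finite (carrier W // ?E) \<longleftrightarrow> finite (carrier W // ?E1)"
      using bij_betw_finite[OF b1] bij_betw_finite[OF b2] by simp
    ultimately show ?thesis by (simp add: reidemeister_def)
  next
    case False
    then show ?thesis by (simp add: reidemeister_def)
  qed
qed

end

theorem mainTheorem4:
  fixes G :: "('g, 'b) monoid_scheme"
    and \<phi> :: "((('n::finite) \<Rightarrow> int) \<Rightarrow> 'g) \<times> ('n \<Rightarrow> int) \<Rightarrow> (('n \<Rightarrow> int) \<Rightarrow> 'g) \<times> ('n \<Rightarrow> int)"
  assumes "comm_group G" and "finite (carrier G)"
    and "\<phi> \<in> iso (wreath_Zk G) (wreath_Zk G)"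
  shows "phi_one G \<phi> \<in> iso (wreath_Zk G) (wreath_Zk G)
    \<and> reidemeister (wreath_Zk G) \<phi> = reidemeister (wreath_Zk G) (phi_one G \<phi>)"
proof -
  interpret wr G \<phi> by (intro wr.intro wr_axioms.intro assms)
  show ?thesis using phi_one_iso reid_eq by simp
qed

end
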